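(* Let $N\ge1$ and $\mu\in\mathcal M_N$. (a) The map $t\mapsto R_N(t\mu)$ is nondecreasing on $[0,\infty)$. (b) Let $I_+(\mu)=\{i\in\{1,\dots,N-1\}:\mu_i<\mu_{i+1}\}=\{i_1<i_2<\dots<i_K\}$ with $K=K(\mu)$, set $i_0=0$, $i_{K+1}=N$, and $J_k=\{i_k+1,\dots,i_{k+1}\}$ for $k=0,\dots,K$. Then $$\lim_{t\to\infty}R_N(t\mu)=\sum_{k=0}^{K}r(|J_k|).$$
   Context: $\mathcal M_N=\{x\in\mathbb R^N:x_{t+1}\ge x_t\ \text{for all }t=1,\dots,N-1\}$. The monotone regression denoiser is the Euclidean projection $\eta^{mono}(y)=\arg\min_{x\in\mathcal M_N}\|y-x\|_2^2$. Its risk is $R_N(\mu)=\mathbb E\|\eta^{mono}(\mu+\mathbf Z)-\mu\|_2^2$, $\mathbf Z\sim\mathsf N(0,I_{N\times N})$, and $r(N)=R_N(0)=\mathbb E\|\eta^{mono}(\mathbf Z)\|_2^2$ (the risk at zero in dimension $N$). *)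

theory Defs
  imports "HOL-Probability.Probability"
begin

text \<open>Vectors in R^N are functions nat => real on the index set {..<N}
  (0-based: paper index i corresponds to i-1 here).\<close>

definition mono_cone :: "nat \<Rightarrow> (nat \<Rightarrow> real) set" where
  "mono_cone N = {x \<in> PiE {..<N} (\<lambda>_. UNIV). \<forall>i. Suc i < N \<longrightarrow> x i \<le> x (Suc i)}"

definition sqdist :: "nat \<Rightarrow> (nat \<Rightarrow> real) \<Rightarrow> (nat \<Rightarrow> real) \<Rightarrow> real" where
  "sqdist N x y = (\<Sum>i<N. (x i - y i)\<^sup>2)"

definition eta_mono :: "nat \<Rightarrow> (nat \<Rightarrow> real) \<Rightarrow> (nat \<Rightarrow> real)" where
  "eta_mono N y = (THE x. x \<in> mono_cone N \<and> (\<forall>z \<in> mono_cone N. sqdist N y x \<le> sqdist N y z))"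

definition gauss :: "nat \<Rightarrow> (nat \<Rightarrow> real) measure" where
  "gauss N = PiM {..<N} (\<lambda>_. density lborel (\<lambda>x. ennreal (std_normal_density x)))"

definition risk :: "nat \<Rightarrow> (nat \<Rightarrow> real) \<Rightarrow> real" where
  "risk N \<mu> = (\<integral>z. sqdist N (eta_mono N (\<lambda>i\<in>{..<N}. \<mu> i + z i)) \<mu> \<partial>gauss N)"

definition r0 :: "nat \<Rightarrow> real" where
  "r0 N = risk N (\<lambda>_. 0)"

text \<open>Paper's I_+(mu) in paper (1-based) indexing: i in {1..N-1} with mu_i < mu_(i+1).\<close>
definition Iplus :: "nat \<Rightarrow> (nat \<Rightarrow> real) \<Rightarrow> nat set" where
  "Iplus N \<mu> = {i. 1 \<le> i \<and> i \<le> N - 1 \<and> \<mu> (i - 1) < \<mu> i}"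

definition breaks :: "nat \<Rightarrow> (nat \<Rightarrow> real) \<Rightarrow> nat list" where
  "breaks N \<mu> = [0] @ sorted_list_of_set (Iplus N \<mu>) @ [N]"

end

theory Submission imports Defs begin

lemma sqdist_nonneg: "0 \<le> sqdist N x y" unfolding sqdist_def by (simp add: sum_nonneg)

lemma mono_coneI: "x \<in> PiE {..<N} (\<lambda>_. UNIV) \<Longrightarrow> (\<And>i. Suc i < N \<Longrightarrow> x i \<le> x (Suc i)) \<Longrightarrow> x \<in> mono_cone N"
  unfolding mono_cone_def by auto

lemma mono_coneD: "x \<in> mono_cone N \<Longrightarrow> Suc i < N \<Longrightarrow> x i \<le> x (Suc i)"
  unfolding mono_cone_def by auto

lemma mono_cone_ext: "x \<in> mono_cone N \<Longrightarrow> x \<in> PiE {..<N} (\<lambda>_. UNIV)"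
  unfolding mono_cone_def by auto

lemma mono_cone_eqI: "x \<in> mono_cone N \<Longrightarrow> y \<in> mono_cone N \<Longrightarrow> (\<And>i. i<N \<Longrightarrow> x i = y i) \<Longrightarrow> x = y"
  by (rule PiE_ext[OF mono_cone_ext mono_cone_ext]) auto

lemma mono_cone_restrict: "(\<And>i. Suc i < N \<Longrightarrow> x i \<le> x (Suc i)) \<Longrightarrow> restrict x {..<N} \<in> mono_cone N"
  by (rule mono_coneI) auto

lemma mono_cone_comb:
  assumes "x \<in> mono_cone N" "y \<in> mono_cone N" "0 \<le> a" "0 \<le> c"
  shows "(\<lambda>i\<in>{..<N}. a * x i + c * y i) \<in> mono_cone N"
proof (rule mono_cone_restrict)
  fix i assume i: "Suc i < N"
  show "a * x i + c * y i \<le> a * x (Suc i) + c * y (Suc i)"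
    using mono_coneD[OF assms(1) i] mono_coneD[OF assms(2) i] assms(3,4)
    by (intro add_mono mult_left_mono) auto
qed

lemma min_VI:
  assumes x: "x \<in> mono_cone N" and mn: "\<forall>z\<in>mono_cone N. sqdist N y x \<le> sqdist N y z"
    and w: "w \<in> mono_cone N"
  shows "(\<Sum>i<N. (y i - x i) * (w i - x i)) \<le> 0"
proof (rule ccontr)
  define A where "A = (\<Sum>i<N. (y i - x i) * (w i - x i))"
  define B where "B = (\<Sum>i<N. (w i - x i)^2)"
  assume "\<not> (\<Sum>i<N. (y i - x i) * (w i - x i)) \<le> 0"
  hence A: "A > 0" unfolding A_def by simp
  have B: "B \<ge> 0" unfolding B_def by (simp add: sum_nonneg)
  define s where "s = A / (A + B)"
  have s0: "0 < s" using A B unfolding s_def by simp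
  have s1: "s \<le> 1" using A B unfolding s_def by simp
  define v where "v = (\<lambda>i\<in>{..<N}. (1 - s) * x i + s * w i)"
  have v: "v \<in> mono_cone N" unfolding v_def using x w s0 s1 by (intro mono_cone_comb) auto
  have "sqdist N y v = (\<Sum>i<N. (y i - x i)^2 - 2 * s * ((y i - x i)*(w i - x i)) + s^2 * (w i - x i)^2)"
    unfolding sqdist_def v_def by (rule sum.cong) (auto simp: power2_eq_square algebra_simps)
  also have "\<dots> = sqdist N y x - 2 * s * A + s^2 * B"
    unfolding sqdist_def A_def B_def by (simp add: sum.distrib sum_subtractf sum_distrib_left)
  finally have "sqdist N y x \<le> sqdist N y x - 2 * s * A + s^2 * B" using mn v by auto
  hence "2 * s * A \<le> s * (s * B)" by (simp add: power2_eq_square)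
  hence "2 * A \<le> s * B" using s0 by simp
  also have "s * B \<le> A" using A B unfolding s_def by (simp add: field_simps)
  finally show False using A by simp
qed

lemma VI_min:
  assumes "\<forall>w\<in>mono_cone N. (\<Sum>i<N. (y i - x i) * (w i - x i)) \<le> 0" and z: "z \<in> mono_cone N"
  shows "sqdist N y x \<le> sqdist N y z"
proof -
  have "sqdist N y z = (\<Sum>i<N. (y i - x i)^2 - 2*((y i - x i)*(z i - x i)) + (z i - x i)^2)"
    unfolding sqdist_def by (rule sum.cong) (auto simp: power2_eq_square algebra_simps)
  also have "\<dots> = sqdist N y x - 2*(\<Sum>i<N. (y i - x i)*(z i - x i)) + (\<Sum>i<N. (z i - x i)^2)"
    unfolding sqdist_def by (simp add: sum.distrib sum_subtractf sum_distrib_left)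
  moreover have "(\<Sum>i<N. (z i - x i)^2) \<ge> 0" by (simp add: sum_nonneg)
  moreover have "(\<Sum>i<N. (y i - x i)*(z i - x i)) \<le> 0" using assms by auto
  ultimately show ?thesis by linarith
qed

lemma VI_unique:
  assumes x1: "x1 \<in> mono_cone N" and x2: "x2 \<in> mono_cone N"
   and v1: "(\<Sum>i<N. (y i - x1 i) * (x2 i - x1 i)) \<le> 0"
   and v2: "(\<Sum>i<N. (y i - x2 i) * (x1 i - x2 i)) \<le> 0"
  shows "x1 = x2"
proof -
  have "(\<Sum>i<N. (x2 i - x1 i)^2) = (\<Sum>i<N. (y i - x1 i) * (x2 i - x1 i)) + (\<Sum>i<N. (y i - x2 i) * (x1 i - x2 i))"
    unfolding sum.distrib[symmetric] by (rule sum.cong) (auto simp: power2_eq_square algebra_simps)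
  hence le: "(\<Sum>i<N. (x2 i - x1 i)^2) \<le> 0" using v1 v2 by simp
  have "\<forall>i\<in>{..<N}. (x2 i - x1 i)^2 = 0"
  proof -
    have "(\<Sum>i<N. (x2 i - x1 i)^2) = 0" using le by (intro antisym sum_nonneg) auto
    thus ?thesis by (subst (asm) sum_nonneg_eq_0_iff) auto
  qed
  thus ?thesis using x1 x2 by (intro mono_cone_eqI) auto
qed


lemma parallelogram:
  assumes a: "a \<in> mono_cone N" and c: "c \<in> mono_cone N"
    and d: "\<forall>x\<in>mono_cone N. d \<le> sqdist N y x"
  shows "sqdist N a c \<le> 2 * (sqdist N y a - d) + 2 * (sqdist N y c - d)"
proof -
  define m where "m = (\<lambda>i\<in>{..<N}. (1/2) * a i + (1/2) * c i)"
  have m: "m \<in> mono_cone N" unfolding m_def using a c by (intro mono_cone_comb) auto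
  have "sqdist N a c = (\<Sum>i<N. 2 * (y i - a i)^2 + 2 * (y i - c i)^2 - 4 * (y i - m i)^2)"
    unfolding sqdist_def m_def by (rule sum.cong) (auto simp: power2_eq_square algebra_simps)
  also have "\<dots> = 2 * sqdist N y a + 2 * sqdist N y c - 4 * sqdist N y m"
    unfolding sqdist_def by (simp add: sum.distrib sum_subtractf sum_distrib_left)
  finally show ?thesis using d m by auto
qed

lemma proj_exists: "\<exists>x\<in>mono_cone N. \<forall>z\<in>mono_cone N. sqdist N y x \<le> sqdist N y z"
proof -
  let ?S = "(\<lambda>x. sqdist N y x) ` mono_cone N"
  define d where "d = Inf ?S"
  have ne: "restrict (\<lambda>_. 0) {..<N} \<in> mono_cone N" by (rule mono_cone_restrict) auto
  have bdd: "bdd_below ?S" by (rule bdd_belowI[of _ 0]) (auto simp: sqdist_nonneg)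
  have dle: "\<forall>x\<in>mono_cone N. d \<le> sqdist N y x" unfolding d_def using bdd by (auto intro: cInf_lower)
  have "\<forall>n. \<exists>x. x \<in> mono_cone N \<and> sqdist N y x < d + inverse (real (Suc n))"
  proof
    fix n
    have "Inf ?S < d + inverse (real (Suc n))" unfolding d_def by simp
    then obtain s where "s \<in> ?S" "s < d + inverse (real (Suc n))" using cInf_lessD[of ?S] ne by blast
    thus "\<exists>x. x \<in> mono_cone N \<and> sqdist N y x < d + inverse (real (Suc n))" by auto
  qed
  then obtain X where X: "\<And>n. X n \<in> mono_cone N" "\<And>n. sqdist N y (X n) < d + inverse (real (Suc n))"
    by metis
  have diff: "(X m i - X n i)^2 \<le> 2 * inverse (real (Suc m)) + 2 * inverse (real (Suc n))" if i: "i < N" for m n i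
  proof -
    have "(X m i - X n i)^2 \<le> sqdist N (X m) (X n)"
      unfolding sqdist_def using i by (intro member_le_sum) auto
    also have "\<dots> \<le> 2 * (sqdist N y (X m) - d) + 2 * (sqdist N y (X n) - d)"
      using parallelogram[OF X(1) X(1) dle] .
    also have "\<dots> \<le> 2 * inverse (real (Suc m)) + 2 * inverse (real (Suc n))"
      using X(2)[of m] X(2)[of n] by simp
    finally show ?thesis .
  qed
  have cau: "Cauchy (\<lambda>n. X n i)" if i: "i < N" for i
  proof (rule CauchyI)
    fix e :: real assume e: "0 < e"
    obtain M :: nat where M: "4 / e^2 < real M" using reals_Archimedean2 by blast
    have "\<forall>m\<ge>M. \<forall>n\<ge>M. norm (X m i - X n i) < e"
    proof (intro allI impI)
      fix m n assume mn: "M \<le> m" "M \<le> n"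
      have "inverse (real (Suc m)) \<le> inverse (real (Suc M))" using mn by (simp add: le_imp_inverse_le)
      moreover have "inverse (real (Suc n)) \<le> inverse (real (Suc M))" using mn by (simp add: le_imp_inverse_le)
      ultimately have "(X m i - X n i)^2 \<le> 4 * inverse (real (Suc M))" using diff[OF i, of m n] by linarith
      also have "\<dots> < e^2"
      proof -
        have "4 / e^2 < real (Suc M)" using M by simp
        hence "4 < e^2 * real (Suc M)" using e by (simp add: field_simps)
        thus ?thesis by (simp add: field_simps)
      qed
      finally have "(X m i - X n i)^2 < e^2" .
      hence "\<bar>X m i - X n i\<bar>^2 < e^2" by simp
      hence "\<bar>X m i - X n i\<bar> < e" using power2_less_imp_less[of "\<bar>X m i - X n i\<bar>" e] e by linarith
      thus "norm (X m i - X n i) < e" by simp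
    qed
    thus "\<exists>M. \<forall>m\<ge>M. \<forall>n\<ge>M. norm (X m i - X n i) < e" by blast
  qed
  define x where "x = (\<lambda>i\<in>{..<N}. lim (\<lambda>n. X n i))"
  have lim: "(\<lambda>n. X n i) \<longlonglongrightarrow> x i" if "i < N" for i
    using cau[OF that] that unfolding x_def by (simp add: Cauchy_convergent_iff convergent_LIMSEQ_iff)
  have xK: "x \<in> mono_cone N"
  proof (unfold x_def, rule mono_cone_restrict)
    fix i assume i: "Suc i < N"
    have "x i \<le> x (Suc i)"
      by (rule LIMSEQ_le[OF lim lim]) (use i mono_coneD[OF X(1) i] in auto)
    thus "lim (\<lambda>n. X n i) \<le> lim (\<lambda>n. X n (Suc i))" using i unfolding x_def by simp
  qed
  have t1: "(\<lambda>n. sqdist N y (X n)) \<longlonglongrightarrow> sqdist N y x"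
    unfolding sqdist_def by (intro tendsto_sum tendsto_intros lim) auto
  have t2: "(\<lambda>n. sqdist N y (X n)) \<longlonglongrightarrow> d"
  proof (rule tendsto_sandwich[of "\<lambda>_. d" _ _ "\<lambda>n. d + inverse (real (Suc n))"])
    show "\<forall>\<^sub>F n in sequentially. d \<le> sqdist N y (X n)" using dle X(1) by auto
    show "\<forall>\<^sub>F n in sequentially. sqdist N y (X n) \<le> d + inverse (real (Suc n))"
      using X(2) by (intro always_eventually allI less_imp_le) blast
  qed (simp, rule LIMSEQ_inverse_real_of_nat_add)
  have "sqdist N y x = d" using LIMSEQ_unique[OF t1 t2] .
  thus ?thesis using xK dle by auto
qed

lemma eta_mono_prop:
  "eta_mono N y \<in> mono_cone N \<and> (\<forall>z\<in>mono_cone N. sqdist N y (eta_mono N y) \<le> sqdist N y z)"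
proof -
  have "\<exists>!x. x \<in> mono_cone N \<and> (\<forall>z\<in>mono_cone N. sqdist N y x \<le> sqdist N y z)"
  proof (rule ex_ex1I)
    show "\<exists>x. x \<in> mono_cone N \<and> (\<forall>z\<in>mono_cone N. sqdist N y x \<le> sqdist N y z)"
      using proj_exists by blast
  next
    fix x1 x2 assume a: "x1 \<in> mono_cone N \<and> (\<forall>z\<in>mono_cone N. sqdist N y x1 \<le> sqdist N y z)"
      "x2 \<in> mono_cone N \<and> (\<forall>z\<in>mono_cone N. sqdist N y x2 \<le> sqdist N y z)"
    show "x1 = x2" using a by (intro VI_unique[of x1 N x2 y] min_VI) auto
  qed
  thus ?thesis unfolding eta_mono_def by (rule theI')
qed

lemma eta_in: "eta_mono N y \<in> mono_cone N" using eta_mono_prop by blast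

lemma eta_VI: "w \<in> mono_cone N \<Longrightarrow> (\<Sum>i<N. (y i - eta_mono N y i) * (w i - eta_mono N y i)) \<le> 0"
  using eta_mono_prop min_VI by blast

lemma eta_eqI:
  assumes "x \<in> mono_cone N" "\<And>w. w \<in> mono_cone N \<Longrightarrow> (\<Sum>i<N. (y i - x i) * (w i - x i)) \<le> 0"
  shows "eta_mono N y = x"
  using VI_unique[OF eta_in assms(1) eta_VI[OF assms(1)] assms(2)[OF eta_in]] .


definition F :: "nat \<Rightarrow> (nat \<Rightarrow> real) \<Rightarrow> (nat \<Rightarrow> real) \<Rightarrow> real" where
  "F N \<nu> z = sqdist N (eta_mono N (\<lambda>i\<in>{..<N}. \<nu> i + z i)) \<nu>"

lemma risk_F: "risk N \<nu> = integral\<^sup>L (gauss N) (F N \<nu>)"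
  unfolding risk_def F_def ..

lemma F_nonneg: "0 \<le> F N \<nu> z" unfolding F_def by (rule sqdist_nonneg)

lemma F_bound:
  assumes mono: "\<And>i. Suc i < N \<Longrightarrow> \<nu> i \<le> \<nu> (Suc i)"
  shows "F N \<nu> z \<le> (\<Sum>i<N. (z i)^2)"
proof -
  define y where "y = (\<lambda>i\<in>{..<N}. \<nu> i + z i)"
  define p where "p = eta_mono N y"
  define a where "a = (\<lambda>i. p i - \<nu> i)"
  have vr: "restrict \<nu> {..<N} \<in> mono_cone N" using mono by (rule mono_cone_restrict)
  have vi: "(\<Sum>i<N. (y i - p i) * (restrict \<nu> {..<N} i - p i)) \<le> 0"
    unfolding p_def by (rule eta_VI[OF vr])
  have e1: "(\<Sum>i<N. (y i - p i) * (restrict \<nu> {..<N} i - p i)) = (\<Sum>i<N. (a i)^2 - z i * a i)"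
    unfolding y_def a_def by (rule sum.cong) (auto simp: power2_eq_square algebra_simps)
  have e2: "(\<Sum>i<N. (a i)^2 - z i * a i) = (\<Sum>i<N. (a i)^2) - (\<Sum>i<N. z i * a i)"
    by (simp add: sum_subtractf)
  have "0 \<le> (\<Sum>i<N. (z i - a i)^2)" by (simp add: sum_nonneg)
  also have "(\<Sum>i<N. (z i - a i)^2) = (\<Sum>i<N. (z i)^2 - 2 * (z i * a i) + (a i)^2)"
    by (rule sum.cong) (auto simp: power2_eq_square algebra_simps)
  also have "\<dots> = (\<Sum>i<N. (z i)^2) - 2 * (\<Sum>i<N. z i * a i) + (\<Sum>i<N. (a i)^2)"
    by (simp add: sum.distrib sum_subtractf sum_distrib_left)
  finally have "0 \<le> (\<Sum>i<N. (z i)^2) - 2 * (\<Sum>i<N. z i * a i) + (\<Sum>i<N. (a i)^2)" .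
  moreover have "F N \<nu> z = (\<Sum>i<N. (a i)^2)"
    unfolding F_def sqdist_def a_def p_def y_def by (rule sum.cong) (auto simp: power2_eq_square)
  ultimately show ?thesis using vi e1 e2 by linarith
qed

lemma F_mono:
  assumes mono: "\<And>i. Suc i < N \<Longrightarrow> \<mu> i \<le> \<mu> (Suc i)" and t: "0 \<le> t" and ts: "t \<le> s"
  shows "F N (\<lambda>i. t * \<mu> i) z \<le> F N (\<lambda>i. s * \<mu> i) z"
proof (cases "t = s")
  case True thus ?thesis by simp
next
  case False
  hence ts': "t < s" using ts by simp
  hence s0: "0 < s" using t by simp
  define l where "l = t / s"
  have l0: "0 \<le> l" and l1: "l < 1" using t ts' s0 unfolding l_def by auto
  have t_eq: "t = l * s" using s0 unfolding l_def by simp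
  define yt where "yt = (\<lambda>i\<in>{..<N}. t * \<mu> i + z i)"
  define ys where "ys = (\<lambda>i\<in>{..<N}. s * \<mu> i + z i)"
  define p where "p = eta_mono N yt"
  define q where "q = eta_mono N ys"
  define a where "a = (\<lambda>i. p i - t * \<mu> i)"
  define b where "b = (\<lambda>i. q i - s * \<mu> i)"
  have pK: "p \<in> mono_cone N" unfolding p_def by (rule eta_in)
  have qK: "q \<in> mono_cone N" unfolding q_def by (rule eta_in)
  define A where "A = (\<Sum>i<N. (a i)^2)"
  define B where "B = (\<Sum>i<N. (b i)^2)"
  define C where "C = (\<Sum>i<N. a i * b i)"
  define Za where "Za = (\<Sum>i<N. z i * a i)"
  define Zb where "Zb = (\<Sum>i<N. z i * b i)"
  define w1 where "w1 = (\<lambda>i\<in>{..<N}. l * q i + 0 * q i)"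
  have w1K: "w1 \<in> mono_cone N" unfolding w1_def using qK l0 by (intro mono_cone_comb) auto
  have vi1: "(\<Sum>i<N. (yt i - p i) * (w1 i - p i)) \<le> 0" unfolding p_def by (rule eta_VI[OF w1K])
  have "(\<Sum>i<N. (yt i - p i) * (w1 i - p i)) = (\<Sum>i<N. l * (z i * b i) - z i * a i - l * (a i * b i) + (a i)^2)"
    unfolding yt_def w1_def a_def b_def t_eq by (rule sum.cong) (auto simp: power2_eq_square algebra_simps)
  also have "\<dots> = l * Zb - Za - l * C + A"
    unfolding A_def C_def Za_def Zb_def by (simp add: sum.distrib sum_subtractf sum_distrib_left)
  finally have I1: "l * Zb - Za - l * C + A \<le> 0" using vi1 by simp
  have I2: "Za - l * Zb - C + l * B \<le> 0"
  proof -
    have "(\<Sum>i<N. (z i - b i) * (a i - l * b i)) = Za - l * Zb - C + l * B"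
    proof -
      have "(\<Sum>i<N. (z i - b i) * (a i - l * b i)) = (\<Sum>i<N. z i * a i - l * (z i * b i) - a i * b i + l * (b i)^2)"
        by (rule sum.cong) (auto simp: power2_eq_square algebra_simps)
      also have "\<dots> = Za - l * Zb - C + l * B"
        unfolding B_def C_def Za_def Zb_def by (simp add: sum.distrib sum_subtractf sum_distrib_left)
      finally show ?thesis .
    qed
    moreover have "(\<Sum>i<N. (z i - b i) * (a i - l * b i)) \<le> 0"
    proof (cases "t = 0")
      case True
      define w2 where "w2 = (\<lambda>i\<in>{..<N}. 1 * q i + 1 * p i)"
      have w2K: "w2 \<in> mono_cone N" unfolding w2_def using qK pK by (intro mono_cone_comb) auto
      have vi2: "(\<Sum>i<N. (ys i - q i) * (w2 i - q i)) \<le> 0" unfolding q_def by (rule eta_VI[OF w2K])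
      have l00: "l = 0" using True unfolding l_def by simp
      have "(\<Sum>i<N. (z i - b i) * (a i - l * b i)) = (\<Sum>i<N. (ys i - q i) * (w2 i - q i))"
        unfolding ys_def w2_def a_def b_def l00 using True by (intro sum.cong) (auto simp: algebra_simps)
      thus ?thesis using vi2 by simp
    next
      case False
      hence tp: "0 < t" using t by simp
      define w2 where "w2 = (\<lambda>i\<in>{..<N}. (s / t) * p i + 0 * p i)"
      have w2K: "w2 \<in> mono_cone N" unfolding w2_def using pK tp s0 by (intro mono_cone_comb) auto
      have vi2: "(\<Sum>i<N. (ys i - q i) * (w2 i - q i)) \<le> 0" unfolding q_def by (rule eta_VI[OF w2K])
      have pw: "(z i - b i) * (a i - l * b i) = l * ((ys i - q i) * (w2 i - q i))" if "i < N" for i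
      proof -
        have "ys i - q i = z i - b i" using that unfolding ys_def b_def by simp
        moreover have "l * (w2 i - q i) = a i - l * b i"
          using that tp s0 unfolding w2_def a_def b_def l_def by (simp add: field_simps)
        moreover have "l * ((ys i - q i) * (w2 i - q i)) = (ys i - q i) * (l * (w2 i - q i))" by simp
        ultimately show ?thesis by simp
      qed
      have "(\<Sum>i<N. (z i - b i) * (a i - l * b i)) = l * (\<Sum>i<N. (ys i - q i) * (w2 i - q i))"
        unfolding sum_distrib_left using pw by (intro sum.cong) auto
      thus ?thesis using vi2 l0 by (simp add: mult_nonneg_nonpos)
    qed
    ultimately show ?thesis by simp
  qed
  have CS: "2 * C \<le> A + B"
  proof -
    have "0 \<le> (\<Sum>i<N. (a i - b i)^2)" by (simp add: sum_nonneg)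
    also have "(\<Sum>i<N. (a i - b i)^2) = (\<Sum>i<N. (a i)^2 - 2 * (a i * b i) + (b i)^2)"
      by (rule sum.cong) (auto simp: power2_eq_square algebra_simps)
    also have "\<dots> = A - 2 * C + B"
      unfolding A_def B_def C_def by (simp add: sum.distrib sum_subtractf sum_distrib_left)
    finally show ?thesis by simp
  qed
  have S: "A + l * B \<le> (1 + l) * C" using I1 I2 by (simp add: algebra_simps)
  have "(1 + l) * (2 * C) \<le> (1 + l) * (A + B)" using CS l0 by (intro mult_left_mono) auto
  hence "(1 - l) * A \<le> (1 - l) * B" using S by (simp add: algebra_simps)
  hence AB: "A \<le> B" using l1 by simp
  have FA: "F N (\<lambda>i. t * \<mu> i) z = A"
    unfolding F_def sqdist_def A_def a_def p_def yt_def by (rule sum.cong) (auto simp: power2_eq_square)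
  have FB: "F N (\<lambda>i. s * \<mu> i) z = B"
    unfolding F_def sqdist_def B_def b_def q_def ys_def by (rule sum.cong) (auto simp: power2_eq_square)
  show ?thesis using AB FA FB by simp
qed


lemma eta_lip: "sqdist N (eta_mono N y) (eta_mono N y') \<le> sqdist N y y'"
proof -
  define p where "p = eta_mono N y"
  define q where "q = eta_mono N y'"
  have v1: "(\<Sum>i<N. (y i - p i) * (q i - p i)) \<le> 0" unfolding p_def q_def by (rule eta_VI[OF eta_in])
  have v2: "(\<Sum>i<N. (y' i - q i) * (p i - q i)) \<le> 0" unfolding p_def q_def by (rule eta_VI[OF eta_in])
  define D where "D = (\<Sum>i<N. (p i - q i)^2)"
  define E where "E = (\<Sum>i<N. (y i - y' i)^2)"
  define X where "X = (\<Sum>i<N. (p i - q i) * (y i - y' i))"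
  have "(\<Sum>i<N. (y i - p i) * (q i - p i)) + (\<Sum>i<N. (y' i - q i) * (p i - q i)) = (\<Sum>i<N. (p i - q i)^2 - (p i - q i) * (y i - y' i))"
    unfolding sum.distrib[symmetric] by (rule sum.cong) (auto simp: power2_eq_square algebra_simps)
  also have "\<dots> = D - X" unfolding D_def X_def by (simp add: sum_subtractf)
  finally have "D \<le> X" using v1 v2 by simp
  moreover have "2 * X \<le> D + E"
  proof -
    have "0 \<le> (\<Sum>i<N. ((p i - q i) - (y i - y' i))^2)" by (simp add: sum_nonneg)
    also have "(\<Sum>i<N. ((p i - q i) - (y i - y' i))^2) = (\<Sum>i<N. (p i - q i)^2 - 2 * ((p i - q i) * (y i - y' i)) + (y i - y' i)^2)"
      by (rule sum.cong) (auto simp: power2_eq_square algebra_simps)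
    also have "\<dots> = D - 2 * X + E"
      unfolding D_def E_def X_def by (simp add: sum.distrib sum_subtractf sum_distrib_left)
    finally show ?thesis by simp
  qed
  ultimately have "D \<le> E" by simp
  thus ?thesis unfolding D_def E_def sqdist_def p_def q_def .
qed

lemma coord_tendsto: "(u \<longlongrightarrow> (a::nat \<Rightarrow> real)) FF \<Longrightarrow> ((\<lambda>n. u n i) \<longlongrightarrow> a i) FF"
  by (rule continuous_on_tendsto_compose[OF continuous_on_product_coordinates]) auto

lemma F_continuous: "continuous_on UNIV (F N \<nu>)"
proof (rule continuous_on_sequentiallyI)
  fix u :: "nat \<Rightarrow> nat \<Rightarrow> real" and a :: "nat \<Rightarrow> real"
  assume ua: "u \<longlonglongrightarrow> a"
  define Y where "Y = (\<lambda>z::nat\<Rightarrow>real. \<lambda>i\<in>{..<N}. \<nu> i + z i)"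
  define s where "s = (\<lambda>n. sqdist N (Y (u n)) (Y a))"
  have s0: "s \<longlonglongrightarrow> 0"
  proof -
    have "s = (\<lambda>n. \<Sum>i<N. (u n i - a i)^2)"
      unfolding s_def sqdist_def Y_def by (intro ext sum.cong) auto
    moreover have "(\<lambda>n. \<Sum>i<N. (u n i - a i)^2) \<longlonglongrightarrow> (\<Sum>i<N. (a i - a i)^2)"
      by (intro tendsto_sum tendsto_intros coord_tendsto[OF ua])
    ultimately show ?thesis by simp
  qed
  have ce: "(\<lambda>n. eta_mono N (Y (u n)) i) \<longlonglongrightarrow> eta_mono N (Y a) i" if i: "i < N" for i
  proof (rule LIM_zero_cancel, rule Lim_null_comparison)
    show "(\<lambda>n. sqrt (s n)) \<longlonglongrightarrow> 0" using tendsto_real_sqrt[OF s0] by simp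
    show "\<forall>\<^sub>F n in sequentially. norm (eta_mono N (Y (u n)) i - eta_mono N (Y a) i) \<le> sqrt (s n)"
    proof (intro always_eventually allI)
      fix n
      have "(eta_mono N (Y (u n)) i - eta_mono N (Y a) i)^2 \<le> sqdist N (eta_mono N (Y (u n))) (eta_mono N (Y a))"
        unfolding sqdist_def using i by (intro member_le_sum) auto
      also have "\<dots> \<le> s n" unfolding s_def by (rule eta_lip)
      finally have "\<bar>eta_mono N (Y (u n)) i - eta_mono N (Y a) i\<bar>^2 \<le> s n" by simp
      thus "norm (eta_mono N (Y (u n)) i - eta_mono N (Y a) i) \<le> sqrt (s n)"
        using real_le_rsqrt by simp
    qed
  qed
  have "(\<lambda>n. \<Sum>i<N. (eta_mono N (Y (u n)) i - \<nu> i)^2) \<longlonglongrightarrow> (\<Sum>i<N. (eta_mono N (Y a) i - \<nu> i)^2)"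
    by (intro tendsto_sum tendsto_intros ce) auto
  thus "(\<lambda>n. F N \<nu> (u n)) \<longlonglongrightarrow> F N \<nu> a" unfolding F_def sqdist_def Y_def .
qed

abbreviation G1 :: "real measure" where
  "G1 \<equiv> density lborel (\<lambda>x. ennreal (std_normal_density x))"

lemma prob_G1: "prob_space G1" by (rule prob_space_normal_density) simp

lemma gauss_component_meas: "i < N \<Longrightarrow> (\<lambda>x. x i) \<in> borel_measurable (gauss N)"
proof -
  assume i: "i < N"
  have "(\<lambda>x. x i) \<in> measurable (gauss N) G1"
    unfolding gauss_def using i by (intro measurable_component_singleton) auto
  moreover have "measurable (gauss N) G1 = borel_measurable (gauss N)" by (rule measurable_cong_sets) auto
  ultimately show ?thesis by simp
qed

lemma restrict_meas: "(\<lambda>z. restrict z {..<N}) \<in> borel_measurable (gauss N)"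
proof (rule measurable_coordinatewise_then_product)
  fix i
  show "(\<lambda>x. restrict x {..<N} i) \<in> borel_measurable (gauss N)"
  proof (cases "i < N")
    case True thus ?thesis using gauss_component_meas[OF True] by simp
  next
    case False thus ?thesis by simp
  qed
qed

lemma F_restrict: "F N \<nu> (restrict z {..<N}) = F N \<nu> z"
  unfolding F_def by (rule arg_cong[where f="\<lambda>y. sqdist N (eta_mono N y) \<nu>"]) auto

lemma F_meas: "F N \<nu> \<in> borel_measurable (gauss N)"
proof -
  have "(\<lambda>z. F N \<nu> (restrict z {..<N})) \<in> borel_measurable (gauss N)"
    by (rule measurable_compose[OF restrict_meas borel_measurable_continuous_onI[OF F_continuous]])
  thus ?thesis by (simp add: F_restrict)
qed

lemma sq_integrable: "i < N \<Longrightarrow> integrable (gauss N) (\<lambda>z. (z i)^2)"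
proof -
  assume i: "i < N"
  have "distr (gauss N) G1 (\<lambda>\<omega>. \<omega> i) = G1"
    unfolding gauss_def using i prob_G1 by (intro distr_PiM_component) auto
  moreover have "integrable G1 (\<lambda>x. x^2)" by (rule integrable_std_normal_distribution_moment)
  ultimately have "integrable (distr (gauss N) G1 (\<lambda>\<omega>. \<omega> i)) (\<lambda>x. x^2)" by simp
  thus ?thesis
    by (subst (asm) integrable_distr_eq) (auto simp: gauss_def[symmetric] intro!: gauss_component_meas measurable_component_singleton i)
qed

lemma sumsq_integrable: "integrable (gauss N) (\<lambda>z. \<Sum>i<N. (z i)^2)"
  by (rule Bochner_Integration.integrable_sum) (auto intro: sq_integrable)

lemma F_integrable:
  assumes "\<And>i. Suc i < N \<Longrightarrow> \<nu> i \<le> \<nu> (Suc i)"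
  shows "integrable (gauss N) (F N \<nu>)"
proof (rule Bochner_Integration.integrable_bound[OF sumsq_integrable F_meas])
  show "AE x in gauss N. norm (F N \<nu> x) \<le> norm (\<Sum>i<N. (x i)^2)"
    using F_bound[of N \<nu>, OF assms] F_nonneg by (intro AE_I2) (auto simp: abs_of_nonneg sum_nonneg intro: order_trans)
qed


lemma sum_shift_ivl: "(\<Sum>j<(d::nat). f (a + j)) = (\<Sum>i\<in>{a..<a+d}. (f i :: real))"
  by (induction d) (auto simp: sum.op_ivl_Suc add.commute)

locale blocks =
  fixes N :: nat and \<mu> :: "nat \<Rightarrow> real" and K :: nat and b :: "nat \<Rightarrow> nat"
  assumes mu_mono: "\<And>i. Suc i < N \<Longrightarrow> \<mu> i \<le> \<mu> (Suc i)"
    and B0: "b 0 = 0" and BK: "b (Suc K) = N"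
    and Bmono: "\<And>k. k \<le> K \<Longrightarrow> b k < b (Suc k)"
    and Bconst: "\<And>k i. k \<le> K \<Longrightarrow> b k \<le> i \<Longrightarrow> Suc i < b (Suc k) \<Longrightarrow> \<mu> i = \<mu> (Suc i)"
    and Bjump: "\<And>k. k < K \<Longrightarrow> \<mu> (b (Suc k) - 1) < \<mu> (b (Suc k))"
begin

definition n :: "nat \<Rightarrow> nat" where "n k = b (Suc k) - b k"
definition sh :: "nat \<Rightarrow> (nat \<Rightarrow> real) \<Rightarrow> (nat \<Rightarrow> real)" where
  "sh k z = (\<lambda>j\<in>{..<n k}. z (b k + j))"
definition Q :: "nat \<Rightarrow> (nat \<Rightarrow> real) \<Rightarrow> (nat \<Rightarrow> real)" where
  "Q k z = eta_mono (n k) (sh k z)"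
definition pz :: "(nat \<Rightarrow> real) \<Rightarrow> nat \<Rightarrow> real" where
  "pz z i = (\<Sum>k\<le>K. if b k \<le> i \<and> i < b (Suc k) then Q k z (i - b k) else 0)"

lemma b_strict: "k < k' \<Longrightarrow> k' \<le> Suc K \<Longrightarrow> b k < b k'"
proof (induction k' arbitrary: k)
  case 0 thus ?case by simp
next
  case (Suc k')
  have s: "b k' < b (Suc k')" using Suc.prems by (intro Bmono) auto
  show ?case
  proof (cases "k = k'")
    case True thus ?thesis using s by simp
  next
    case False thus ?thesis using Suc s by (meson less_Suc_eq less_trans Suc_leD)
  qed
qed

lemma b_le_N: "k \<le> Suc K \<Longrightarrow> b k \<le> N"
  using b_strict[of k "Suc K"] BK by (cases "k = Suc K") auto

lemma block_of: assumes "i < N" shows "\<exists>k\<le>K. b k \<le> i \<and> i < b (Suc k)"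
proof -
  define S where "S = {k. k \<le> K \<and> b k \<le> i}"
  have "0 \<in> S" unfolding S_def using B0 by simp
  have fin: "finite S" unfolding S_def by simp
  define k where "k = Max S"
  have kS: "k \<in> S" unfolding k_def using fin \<open>0 \<in> S\<close> by (intro Max_in) auto
  have "i < b (Suc k)"
  proof (rule ccontr)
    assume "\<not> i < b (Suc k)"
    hence le: "b (Suc k) \<le> i" by simp
    show False
    proof (cases "k = K")
      case True thus False using le BK assms by simp
    next
      case False
      hence "Suc k \<in> S" using kS le unfolding S_def by auto
      hence "Suc k \<le> k" unfolding k_def using fin by (intro Max_ge) auto
      thus False by simp
    qed
  qed
  thus ?thesis using kS unfolding S_def by auto
qed

lemma block_unique:
  assumes "k \<le> K" "k' \<le> K" "b k \<le> i" "i < b (Suc k)" "b k' \<le> i" "i < b (Suc k')"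
  shows "k = k'"
proof (rule ccontr)
  assume "k \<noteq> k'"
  hence "k < k' \<or> k' < k" by auto
  thus False
  proof
    assume "k < k'"
    hence "Suc k = k' \<or> Suc k < k'" by auto
    hence "b (Suc k) \<le> b k'" using b_strict[of "Suc k" k'] assms by (auto intro: less_imp_le)
    thus False using assms by simp
  next
    assume "k' < k"
    hence "Suc k' = k \<or> Suc k' < k" by auto
    hence "b (Suc k') \<le> b k" using b_strict[of "Suc k'" k] assms by (auto intro: less_imp_le)
    thus False using assms by simp
  qed
qed

lemma sum_blocks_aux: "m \<le> K \<Longrightarrow> (\<Sum>i<b (Suc m). f i) = (\<Sum>k\<le>m. \<Sum>j<n k. (f (b k + j) :: real))"
proof (induction m)
  case 0
  show ?case using sum_shift_ivl[where d="n 0" and f=f and a="b 0"] B0 by (simp add: n_def atLeast0LessThan)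
next
  case (Suc m)
  have lt: "b (Suc m) < b (Suc (Suc m))" using Suc.prems by (intro Bmono) auto
  have "(\<Sum>i<b (Suc (Suc m)). f i) = (\<Sum>i\<in>{0..<b (Suc m)}. f i) + (\<Sum>i\<in>{b (Suc m)..<b (Suc (Suc m))}. f i)"
    using lt by (subst sum.atLeastLessThan_concat) (auto simp: atLeast0LessThan)
  also have "(\<Sum>i\<in>{b (Suc m)..<b (Suc (Suc m))}. f i) = (\<Sum>j<n (Suc m). f (b (Suc m) + j))"
    using sum_shift_ivl[where d="n (Suc m)" and f=f and a="b (Suc m)"] lt by (simp add: n_def)
  finally show ?case using Suc by (simp add: atLeast0LessThan)
qed

lemma sum_blocks: "(\<Sum>i<N. f i) = (\<Sum>k\<le>K. \<Sum>j<n k. (f (b k + j) :: real))"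
  using sum_blocks_aux[of K f] BK by simp

lemma in_block: "k \<le> K \<Longrightarrow> j < n k \<Longrightarrow> b k + j < b (Suc k)"
  unfolding n_def by simp

lemma in_block_N: "k \<le> K \<Longrightarrow> j < n k \<Longrightarrow> b k + j < N"
  using in_block b_le_N[of "Suc k"] by fastforce

lemma mu_const: "k \<le> K \<Longrightarrow> j < n k \<Longrightarrow> \<mu> (b k + j) = \<mu> (b k)"
proof (induction j)
  case 0 thus ?case by simp
next
  case (Suc j)
  have "\<mu> (b k + j) = \<mu> (Suc (b k + j))"
    using Suc.prems in_block[of k "Suc j"] by (intro Bconst[of k]) auto
  thus ?case using Suc by simp
qed

lemma pz_block: assumes k: "k \<le> K" and j: "j < n k" shows "pz z (b k + j) = Q k z j"
proof -
  have "pz z (b k + j) = (\<Sum>k'\<le>K. if k' = k then Q k z j else 0)"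
    unfolding pz_def
  proof (rule sum.cong[OF refl])
    fix k' assume k': "k' \<in> {..K}"
    show "(if b k' \<le> b k + j \<and> b k + j < b (Suc k') then Q k' z (b k + j - b k') else 0) = (if k' = k then Q k z j else 0)"
      using block_unique[of k k' "b k + j"] k k' in_block[OF k j] by auto
  qed
  also have "\<dots> = Q k z j" using k by simp
  finally show ?thesis .
qed

lemma Q_in: "Q k z \<in> mono_cone (n k)" unfolding Q_def by (rule eta_in)

lemma F0_sh: "F (n k) (\<lambda>_. 0) (sh k z) = (\<Sum>j<n k. (Q k z j)^2)"
proof -
  have "(\<lambda>j\<in>{..<n k}. 0 + sh k z j) = sh k z" unfolding sh_def by (rule ext) simp
  thus ?thesis unfolding F_def sqdist_def Q_def by simp
qed

definition H :: "(nat \<Rightarrow> real) \<Rightarrow> real" where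
  "H z = (\<Sum>k\<le>K. F (n k) (\<lambda>_. 0) (sh k z))"

lemma F_eventually: "eventually (\<lambda>t. F N (\<lambda>i. t * \<mu> i) z = H z) at_top"
proof -
  have ev: "eventually (\<lambda>t. \<forall>k\<in>{..<K}. pz z (b (Suc k) - 1) - pz z (b (Suc k)) \<le> t * (\<mu> (b (Suc k)) - \<mu> (b (Suc k) - 1))) at_top"
  proof (intro eventually_ball_finite ballI)
    fix k assume k: "k \<in> {..<K}"
    define g where "g = \<mu> (b (Suc k)) - \<mu> (b (Suc k) - 1)"
    define c where "c = pz z (b (Suc k) - 1) - pz z (b (Suc k))"
    have g: "0 < g" using Bjump[of k] k unfolding g_def by simp
    show "eventually (\<lambda>t. pz z (b (Suc k) - 1) - pz z (b (Suc k)) \<le> t * (\<mu> (b (Suc k)) - \<mu> (b (Suc k) - 1))) at_top"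
      using eventually_ge_at_top[of "c / g"]
    proof (rule eventually_mono)
      fix t :: real assume "c / g \<le> t"
      hence "c \<le> t * g" using g by (simp add: pos_divide_le_eq)
      thus "pz z (b (Suc k) - 1) - pz z (b (Suc k)) \<le> t * (\<mu> (b (Suc k)) - \<mu> (b (Suc k) - 1))"
        unfolding c_def g_def .
    qed
  qed simp
  show ?thesis using ev
  proof (rule eventually_mono)
    fix t :: real
    assume cond: "\<forall>k\<in>{..<K}. pz z (b (Suc k) - 1) - pz z (b (Suc k)) \<le> t * (\<mu> (b (Suc k)) - \<mu> (b (Suc k) - 1))"
    define x where "x = (\<lambda>i\<in>{..<N}. t * \<mu> i + pz z i)"
    define y where "y = (\<lambda>i\<in>{..<N}. t * \<mu> i + z i)"
    have xK: "x \<in> mono_cone N"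
    proof (rule mono_coneI)
      show "x \<in> PiE {..<N} (\<lambda>_. UNIV)" unfolding x_def by simp
    next
      fix i assume i: "Suc i < N"
      obtain k where k: "k \<le> K" "b k \<le> i" "i < b (Suc k)" using block_of[of i] i by auto
      show "x i \<le> x (Suc i)"
      proof (cases "Suc i < b (Suc k)")
        case True
        have mu: "\<mu> i = \<mu> (Suc i)" using Bconst[OF k(1,2) True] .
        define j where "j = i - b k"
        have ij: "i = b k + j" using k unfolding j_def by simp
        have j1: "Suc j < n k" using True k unfolding j_def n_def by simp
        have "pz z i = Q k z j" unfolding ij using k j1 by (intro pz_block) auto
        moreover have "pz z (Suc i) = Q k z (Suc j)" using k j1 pz_block[of k "Suc j" z] ij by simp
        moreover have "Q k z j \<le> Q k z (Suc j)" using mono_coneD[OF Q_in j1] .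
        ultimately show ?thesis unfolding x_def using i mu by simp
      next
        case False
        hence si: "Suc i = b (Suc k)" using k by simp
        have "k \<noteq> K" using si BK i by auto
        hence "k < K" using k by simp
        hence "pz z (b (Suc k) - 1) - pz z (b (Suc k)) \<le> t * (\<mu> (b (Suc k)) - \<mu> (b (Suc k) - 1))"
          using cond by auto
        moreover have "b (Suc k) - 1 = i" using si by simp
        ultimately have "pz z i - pz z (Suc i) \<le> t * (\<mu> (Suc i) - \<mu> i)" using si by simp
        thus ?thesis unfolding x_def using i by (simp add: algebra_simps)
      qed
    qed
    have vi: "(\<Sum>i<N. (y i - x i) * (w i - x i)) \<le> 0" if w: "w \<in> mono_cone N" for w
    proof -
      have "(\<Sum>i<N. (y i - x i) * (w i - x i)) = (\<Sum>i<N. (z i - pz z i) * (w i - t * \<mu> i - pz z i))"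
        unfolding x_def y_def by (rule sum.cong) auto
      also have "\<dots> = (\<Sum>k\<le>K. \<Sum>j<n k. (z (b k + j) - pz z (b k + j)) * (w (b k + j) - t * \<mu> (b k + j) - pz z (b k + j)))"
        by (rule sum_blocks)
      also have "\<dots> \<le> 0"
      proof (rule sum_nonpos)
        fix k assume k: "k \<in> {..K}"
        define w' where "w' = (\<lambda>j\<in>{..<n k}. w (b k + j) - t * \<mu> (b k))"
        have w'K: "w' \<in> mono_cone (n k)"
          unfolding w'_def
        proof (rule mono_cone_restrict)
          fix j assume j: "Suc j < n k"
          have "Suc (b k + j) < N" using in_block_N[of k "Suc j"] k j by simp
          thus "w (b k + j) - t * \<mu> (b k) \<le> w (b k + Suc j) - t * \<mu> (b k)"
            using mono_coneD[OF w] by simp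
        qed
        have "(\<Sum>j<n k. (z (b k + j) - pz z (b k + j)) * (w (b k + j) - t * \<mu> (b k + j) - pz z (b k + j)))
            = (\<Sum>j<n k. (sh k z j - Q k z j) * (w' j - Q k z j))"
          using k by (intro sum.cong) (auto simp: sh_def w'_def pz_block mu_const)
        also have "\<dots> \<le> 0" unfolding Q_def by (rule eta_VI[OF w'K])
        finally show "(\<Sum>j<n k. (z (b k + j) - pz z (b k + j)) * (w (b k + j) - t * \<mu> (b k + j) - pz z (b k + j))) \<le> 0" .
      qed
      finally show ?thesis .
    qed
    have eta: "eta_mono N y = x" by (rule eta_eqI[OF xK vi])
    have "F N (\<lambda>i. t * \<mu> i) z = (\<Sum>i<N. (pz z i)^2)"
      unfolding F_def sqdist_def eta[unfolded y_def] by (rule sum.cong) (auto simp: x_def)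
    also have "\<dots> = (\<Sum>k\<le>K. \<Sum>j<n k. (pz z (b k + j))^2)" by (rule sum_blocks)
    also have "\<dots> = (\<Sum>k\<le>K. \<Sum>j<n k. (Q k z j)^2)"
      by (intro sum.cong) (auto simp: pz_block)
    also have "\<dots> = H z" unfolding H_def by (simp add: F0_sh)
    finally show "F N (\<lambda>i. t * \<mu> i) z = H z" .
  qed
qed


lemma sh_meas: "k \<le> K \<Longrightarrow> sh k \<in> measurable (gauss N) (gauss (n k))"
  unfolding gauss_def sh_def
  by (rule measurable_restrict, rule measurable_component_singleton) (use in_block_N in auto)

lemma sh_distr: assumes k: "k \<le> K" shows "distr (gauss N) (gauss (n k)) (sh k) = gauss (n k)"
proof -
  have "distr (PiM {..<N} (\<lambda>_. G1)) (PiM {..<n k} (\<lambda>i. (\<lambda>_. G1) (b k + i))) (\<lambda>\<omega>. \<lambda>j\<in>{..<n k}. \<omega> (b k + j))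
      = PiM {..<n k} (\<lambda>i. (\<lambda>_. G1) (b k + i))"
    using k by (intro distr_PiM_reindex) (auto simp: prob_G1 inj_on_def intro: in_block_N)
  thus ?thesis unfolding gauss_def sh_def by simp
qed

lemma sh_integrable: assumes k: "k \<le> K" shows "integrable (gauss N) (\<lambda>z. F (n k) (\<lambda>_. 0) (sh k z))"
  using integrable_distr_eq[OF sh_meas[OF k] F_meas[of "n k" "\<lambda>_. 0"]] sh_distr[OF k] F_integrable[of "n k" "\<lambda>_. 0"]
  by simp

lemma sh_integral: assumes k: "k \<le> K" shows "integral\<^sup>L (gauss N) (\<lambda>z. F (n k) (\<lambda>_. 0) (sh k z)) = r0 (n k)"
  using integral_distr[OF sh_meas[OF k] F_meas[of "n k" "\<lambda>_. 0"]] sh_distr[OF k]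
  by (simp add: r0_def risk_F)

lemma H_integral: "integral\<^sup>L (gauss N) H = (\<Sum>k\<le>K. r0 (n k))"
  unfolding H_def by (subst Bochner_Integration.integral_sum) (auto simp: sh_integrable sh_integral)

lemma limit: "((\<lambda>t. risk N (\<lambda>i. t * \<mu> i)) \<longlongrightarrow> (\<Sum>k\<le>K. r0 (n k))) at_top"
proof -
  have Hm: "H \<in> borel_measurable (gauss N)"
  proof (rule borel_measurable_LIMSEQ_real)
    fix z
    have "eventually (\<lambda>m. F N (\<lambda>i. real m * \<mu> i) z = H z) sequentially"
      using eventually_compose_filterlim[OF F_eventually filterlim_real_sequentially] .
    thus "(\<lambda>m. F N (\<lambda>i. real m * \<mu> i) z) \<longlonglongrightarrow> H z" by (rule tendsto_eventually)
  qed (rule F_meas)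
  have "((\<lambda>t. integral\<^sup>L (gauss N) (F N (\<lambda>i. t * \<mu> i))) \<longlongrightarrow> integral\<^sup>L (gauss N) H) at_top"
  proof (rule integral_dominated_convergence_at_top[OF Hm F_meas sumsq_integrable])
    show "AE z in gauss N. ((\<lambda>t. F N (\<lambda>i. t * \<mu> i) z) \<longlongrightarrow> H z) at_top"
      by (intro AE_I2 tendsto_eventually F_eventually)
    show "\<forall>\<^sub>F t in at_top. AE z in gauss N. norm (F N (\<lambda>i. t * \<mu> i) z) \<le> (\<Sum>i<N. (z i)^2)"
      using eventually_ge_at_top[of "0::real"]
    proof (rule eventually_mono)
      fix t :: real assume t: "0 \<le> t"
      have mono: "t * \<mu> i \<le> t * \<mu> (Suc i)" if "Suc i < N" for i
        using mu_mono[OF that] t by (rule mult_left_mono)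
      show "AE z in gauss N. norm (F N (\<lambda>i. t * \<mu> i) z) \<le> (\<Sum>i<N. (z i)^2)"
        using F_bound[of N "\<lambda>i. t * \<mu> i", OF mono] F_nonneg by (intro AE_I2) simp
    qed
  qed
  thus ?thesis unfolding risk_F H_integral .
qed

end


lemma breaks_blocks:
  assumes N: "N \<ge> 1" and mu: "\<mu> \<in> mono_cone N"
  shows "blocks N \<mu> (card (Iplus N \<mu>)) (\<lambda>k. breaks N \<mu> ! k)"
proof -
  define S where "S = sorted_list_of_set (Iplus N \<mu>)"
  define K where "K = card (Iplus N \<mu>)"
  have finI: "finite (Iplus N \<mu>)"
    by (rule finite_subset[of _ "{..N}"]) (auto simp: Iplus_def)
  have lenS: "length S = K" unfolding S_def K_def by simp
  have setS: "set S = Iplus N \<mu>" unfolding S_def using finI by simp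
  have sortS: "sorted_wrt (<) S" unfolding S_def by (rule strict_sorted_list_of_set)
  have br: "breaks N \<mu> = 0 # S @ [N]" unfolding breaks_def S_def by simp
  have memI: "S ! m \<in> Iplus N \<mu>" if "m < K" for m using that lenS setS nth_mem by metis
  have Ip: "1 \<le> S ! m" "S ! m \<le> N - 1" "\<mu> (S ! m - 1) < \<mu> (S ! m)" if "m < K" for m
    using memI[OF that] unfolding Iplus_def by auto
  have b0: "breaks N \<mu> ! 0 = 0" unfolding br by simp
  have bS: "breaks N \<mu> ! Suc k = (if k < K then S ! k else N)" if "k \<le> K" for k
    using that lenS unfolding br by (auto simp: nth_append)
  have Sle: "S ! m \<le> S ! m'" if "m \<le> m'" "m' < K" for m m'
    using sorted_wrt_nth_less[OF sortS, of m m'] that lenS by (cases "m = m'") auto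
  have mono: "\<And>i. Suc i < N \<Longrightarrow> \<mu> i \<le> \<mu> (Suc i)" using mu by (rule mono_coneD)
  have Bmono: "breaks N \<mu> ! k < breaks N \<mu> ! Suc k" if k: "k \<le> K" for k
  proof (cases k)
    case 0
    thus ?thesis using bS[of 0] Ip(1)[of 0] N b0 by auto
  next
    case (Suc k')
    have "breaks N \<mu> ! k = S ! k'" using bS[of k'] k Suc by auto
    moreover have "S ! k' < breaks N \<mu> ! Suc k"
    proof (cases "k < K")
      case True thus ?thesis using bS[OF k] sorted_wrt_nth_less[OF sortS, of k' k] lenS Suc by auto
    next
      case False thus ?thesis using bS[OF k] Ip(2)[of k'] N k Suc by auto
    qed
    ultimately show ?thesis by simp
  qed
  have L1: "k \<le> m" if "k \<le> K" "m < K" "breaks N \<mu> ! k < S ! m" for k m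
  proof (cases k)
    case (Suc k')
    have "breaks N \<mu> ! k = S ! k'" using bS[of k'] that Suc by auto
    hence "\<not> m \<le> k'" using Sle[of m k'] that Suc by auto
    thus ?thesis using Suc by simp
  qed simp
  have L2: "m < k" if "k \<le> K" "m < K" "S ! m < breaks N \<mu> ! Suc k" for k m
  proof (cases "k < K")
    case True
    hence "S ! m < S ! k" using bS[of k] that by simp
    thus ?thesis using Sle[of k m] that by (cases "k \<le> m") auto
  next
    case False thus ?thesis using that by simp
  qed
  have bN: "breaks N \<mu> ! Suc k \<le> N" if "k \<le> K" for k
    using bS[OF that] Ip(2)[of k] N by auto
  show ?thesis
  proof (unfold_locales, fold K_def)
    show "\<And>i. Suc i < N \<Longrightarrow> \<mu> i \<le> \<mu> (Suc i)" by (rule mono)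
    show "breaks N \<mu> ! 0 = 0" by (rule b0)
    show "breaks N \<mu> ! Suc K = N" using bS[of K] by simp
    show "\<And>k. k \<le> K \<Longrightarrow> breaks N \<mu> ! k < breaks N \<mu> ! Suc k" by (rule Bmono)
    show "\<And>k. k < K \<Longrightarrow> \<mu> (breaks N \<mu> ! Suc k - 1) < \<mu> (breaks N \<mu> ! Suc k)"
      using bS Ip(3) by auto
    show "\<mu> i = \<mu> (Suc i)" if k: "k \<le> K" and i1: "breaks N \<mu> ! k \<le> i" and i2: "Suc i < breaks N \<mu> ! Suc k" for k i
    proof (rule ccontr)
      assume ne: "\<mu> i \<noteq> \<mu> (Suc i)"
      have iN: "Suc i < N" using i2 bN[OF k] by simp
      hence lt: "\<mu> i < \<mu> (Suc i)" using mono[OF iN] ne by simp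
      have "Suc i \<in> Iplus N \<mu>" unfolding Iplus_def using iN lt by auto
      then obtain m where m: "m < K" "S ! m = Suc i" using setS lenS by (metis in_set_conv_nth)
      have "k \<le> m" using L1[OF k m(1)] i1 m(2) by simp
      moreover have "m < k" using L2[OF k m(1)] i2 m(2) by simp
      ultimately show False by simp
    qed
  qed
qed

theorem mainTheorem9:
  fixes N :: nat and \<mu> :: "nat \<Rightarrow> real"
  assumes "N \<ge> 1" and "\<mu> \<in> mono_cone N"
  shows "mono_on {0..} (\<lambda>t::real. risk N (\<lambda>i. t * \<mu> i)) \<and>
         ((\<lambda>t::real. risk N (\<lambda>i. t * \<mu> i)) \<longlongrightarrow>
           (\<Sum>k\<le>card (Iplus N \<mu>). r0 (breaks N \<mu> ! Suc k - breaks N \<mu> ! k))) at_top"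
proof
  have mono: "\<And>i. Suc i < N \<Longrightarrow> \<mu> i \<le> \<mu> (Suc i)" using assms(2) by (rule mono_coneD)
  show "mono_on {0..} (\<lambda>t::real. risk N (\<lambda>i. t * \<mu> i))"
  proof (rule mono_onI)
    fix t s :: real assume t: "t \<in> {0..}" and s: "s \<in> {0..}" and ts: "t \<le> s"
    have mt: "\<And>i. Suc i < N \<Longrightarrow> t * \<mu> i \<le> t * \<mu> (Suc i)" using mono t by (simp add: mult_left_mono)
    have ms: "\<And>i. Suc i < N \<Longrightarrow> s * \<mu> i \<le> s * \<mu> (Suc i)" using mono s by (simp add: mult_left_mono)
    show "risk N (\<lambda>i. t * \<mu> i) \<le> risk N (\<lambda>i. s * \<mu> i)"
      unfolding risk_F
      by (rule integral_mono[OF F_integrable[of N "\<lambda>i. t * \<mu> i", OF mt] F_integrable[of N "\<lambda>i. s * \<mu> i", OF ms]])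
         (use F_mono[of N \<mu> t s, OF mono] t ts in auto)
  qed
next
  interpret blocks N \<mu> "card (Iplus N \<mu>)" "\<lambda>k. breaks N \<mu> ! k"
    by (rule breaks_blocks[OF assms])
  show "((\<lambda>t::real. risk N (\<lambda>i. t * \<mu> i)) \<longlongrightarrow>
           (\<Sum>k\<le>card (Iplus N \<mu>). r0 (breaks N \<mu> ! Suc k - breaks N \<mu> ! k))) at_top"
    using limit unfolding n_def .
qed

end
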